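(* Let $\Omega\subseteq\mathbb R^N$ be open, $u\in\widetilde W^{s,p}_{loc}(\Omega)$ and $f\in L^1_{loc}(\Omega)$. For each $\varepsilon>0$ let $A_\varepsilon\subset\mathbb R^N\times\mathbb R^N$ be a neighborhood of the diagonal $\mathbf D=\{(x,x):x\in\mathbb R^N\}$ such that (i) $(y,x)\in A_\varepsilon$ whenever $(x,y)\in A_\varepsilon$, and (ii) the Hausdorff distance between $A_\varepsilon$ and $\mathbf D$ tends to $0$ as $\varepsilon\to0^+$. Set $A_\varepsilon(x)=\{y:(x,y)\in A_\varepsilon\}$ and $$g_\varepsilon(x)=\int_{\mathbb R^N\setminus A_\varepsilon(x)}\frac{(u(x)-u(y))^{p-1}}{|x-y|^{N+ps}}\,dy.$$ If $2g_\varepsilon\to f$ in $L^1_{loc}(\Omega)$ as $\varepsilon\to0^+$, then for every $\varphi\in C^\infty_c(\Omega)$ $$\int_{\mathbb R^N\times\mathbb R^N}\frac{(u(x)-u(y))^{p-1}(\varphi(x)-\varphi(y))}{|x-y|^{N+ps}}dxdy=\int_\Omega f\varphi\,dx,$$ i.e. $u$ is a weak solution of $(-\Delta)^s_pu=f$ in $\Omega$.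
   Context: Fixed $s\in(0,1)$, $p\in(1,\infty)$. $a^q:=|a|^{q-1}a$. For open $U$, $W^{s,p}(U)$ is the fractional Sobolev space with norm $\|u\|_{L^p(U)}+(\int_{U\times U}\frac{|u(x)-u(y)|^p}{|x-y|^{N+ps}})^{1/p}$. For bounded open $\Omega'$, $\widetilde W^{s,p}(\Omega')$ is the set of $u\in L^p_{loc}(\mathbb R^N)$ for which some bounded open $U\supset\overline{\Omega'}$ has $u\in W^{s,p}(U)$ and $\int_{\mathbb R^N}\frac{|u|^{p-1}}{(1+|x|)^{N+ps}}dx<\infty$; $\widetilde W^{s,p}_{loc}(\Omega)$ is the set of $u$ lying in $\widetilde W^{s,p}(\Omega')$ for every bounded open $\Omega'\subseteq\Omega$. Hausdorff distance: $\mathrm{dist}_H(A,B)=\max\{\sup_{x\in A}\mathrm{dist}(x,B),\sup_{y\in B}\mathrm{dist}(y,A)\}$. *)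

theory Defs
  imports "HOL-Analysis.Analysis"
begin

text \<open>Signed power a^q := |a|^(q-1) a = sgn a * |a| powr q.\<close>
definition spow :: "real \<Rightarrow> real \<Rightarrow> real" where
  "spow a q = sgn a * \<bar>a\<bar> powr q"

definition smooth_fun :: "('a::euclidean_space \<Rightarrow> real) \<Rightarrow> bool" where
  "smooth_fun f \<longleftrightarrow> (\<exists>S. f \<in> S \<and> (\<forall>g\<in>S. continuous_on UNIV g \<and>
      (\<forall>i\<in>Basis. \<exists>g'\<in>S. \<forall>x. ((\<lambda>t. g (x + t *\<^sub>R i)) has_real_derivative g' x) (at 0))))"

definition test_fun :: "'a::euclidean_space set \<Rightarrow> ('a \<Rightarrow> real) \<Rightarrow> bool" where
  "test_fun \<Omega> \<phi> \<longleftrightarrow> smooth_fun \<phi> \<and> compact (closure {x. \<phi> x \<noteq> 0})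
      \<and> closure {x. \<phi> x \<noteq> 0} \<subseteq> \<Omega>"

definition Lp_loc :: "real \<Rightarrow> ('a::euclidean_space \<Rightarrow> real) \<Rightarrow> bool" where
  "Lp_loc p u \<longleftrightarrow> u \<in> borel_measurable lebesgue \<and>
     (\<forall>K. compact K \<longrightarrow> (\<integral>\<^sup>+x\<in>K. ennreal (\<bar>u x\<bar> powr p) \<partial>lebesgue) < \<infinity>)"

definition in_Wsp :: "real \<Rightarrow> real \<Rightarrow> 'a::euclidean_space set \<Rightarrow> ('a \<Rightarrow> real) \<Rightarrow> bool" where
  "in_Wsp s p U u \<longleftrightarrow> set_borel_measurable lebesgue U u \<and>
     (\<integral>\<^sup>+x\<in>U. ennreal (\<bar>u x\<bar> powr p) \<partial>lebesgue) < \<infinity> \<and>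
     (\<integral>\<^sup>+z\<in>U \<times> U. ennreal (\<bar>u (fst z) - u (snd z)\<bar> powr p /
         norm (fst z - snd z) powr (real DIM('a) + p * s)) \<partial>(lebesgue \<Otimes>\<^sub>M lebesgue)) < \<infinity>"

definition tW :: "real \<Rightarrow> real \<Rightarrow> 'a::euclidean_space set \<Rightarrow> ('a \<Rightarrow> real) \<Rightarrow> bool" where
  "tW s p \<Omega>' u \<longleftrightarrow> Lp_loc p u \<and>
     (\<exists>U. open U \<and> bounded U \<and> closure \<Omega>' \<subseteq> U \<and> in_Wsp s p U u) \<and>
     (\<integral>\<^sup>+x. ennreal (\<bar>u x\<bar> powr (p - 1) / (1 + norm x) powr (real DIM('a) + p * s)) \<partial>lebesgue) < \<infinity>"

definition tW_loc :: "real \<Rightarrow> real \<Rightarrow> 'a::euclidean_space set \<Rightarrow> ('a \<Rightarrow> real) \<Rightarrow> bool" where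
  "tW_loc s p \<Omega> u \<longleftrightarrow> (\<forall>\<Omega>'. open \<Omega>' \<and> bounded \<Omega>' \<and> \<Omega>' \<subseteq> \<Omega> \<longrightarrow> tW s p \<Omega>' u)"

definition L1_loc :: "'a::euclidean_space set \<Rightarrow> ('a \<Rightarrow> real) \<Rightarrow> bool" where
  "L1_loc \<Omega> f \<longleftrightarrow> (\<forall>K. compact K \<and> K \<subseteq> \<Omega> \<longrightarrow> set_integrable lebesgue K f)"

definition L1_loc_tendsto :: "'a::euclidean_space set \<Rightarrow> (real \<Rightarrow> 'a \<Rightarrow> real) \<Rightarrow> ('a \<Rightarrow> real) \<Rightarrow> bool" where
  "L1_loc_tendsto \<Omega> G f \<longleftrightarrow> (\<forall>K. compact K \<and> K \<subseteq> \<Omega> \<longrightarrow>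
      (\<forall>\<^sub>F \<epsilon> in at_right 0. set_integrable lebesgue K (G \<epsilon>)) \<and>
      ((\<lambda>\<epsilon>. LINT x:K|lebesgue. \<bar>G \<epsilon> x - f x\<bar>) \<longlongrightarrow> 0) (at_right 0))"

definition hausdist_ext :: "'b::metric_space set \<Rightarrow> 'b set \<Rightarrow> ereal" where
  "hausdist_ext A B = max (SUP x\<in>A. ereal (infdist x B)) (SUP y\<in>B. ereal (infdist y A))"

definition diag :: "('a \<times> 'a) set" where
  "diag = {(x, x) | x. True}"

end

theory Submission
  imports Defs
begin


lemma borel_to_lebesgue: "f \<in> borel_measurable (borel::'a::euclidean_space measure) \<Longrightarrow> f \<in> borel_measurable lebesgue"
  by (rule measurable_completion, simp)

lemma ennreal_le_suminf: "(f::nat \<Rightarrow> ennreal) n \<le> suminf f"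
  using sum_le_suminf[of f "{n}"] by simp

lemma emeasure_lebesgue_cball:
  "0 \<le> r \<Longrightarrow> emeasure lebesgue (cball (c::'a::euclidean_space) r) = ennreal (unit_ball_vol DIM('a) * r ^ DIM('a))"
  by (simp add: emeasure_completion emeasure_cball)

lemma nn_integral_dyadic_le:
  fixes x0 :: "'a::euclidean_space" and f :: "'a \<Rightarrow> real"
  assumes c: "\<And>k. 0 \<le> c k" and r: "\<And>k. 0 \<le> r k"
    and f: "\<And>y. \<exists>k. f y \<le> c k * indicator (cball x0 (r k)) y"
  shows "(\<integral>\<^sup>+y. ennreal (f y) \<partial>lebesgue) \<le> (\<Sum>k. ennreal (c k * (unit_ball_vol DIM('a) * r k ^ DIM('a))))"
proof -
  have "(\<integral>\<^sup>+y. ennreal (f y) \<partial>lebesgue) \<le> (\<integral>\<^sup>+y. (\<Sum>k. ennreal (c k) * indicator (cball x0 (r k)) y) \<partial>lebesgue)"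
  proof (rule nn_integral_mono)
    fix y :: 'a
    obtain k where k: "f y \<le> c k * indicator (cball x0 (r k)) y" using f by blast
    have "ennreal (f y) \<le> ennreal (c k) * indicator (cball x0 (r k)) y"
      using k c[of k] by (cases "y \<in> cball x0 (r k)") (auto simp: ennreal_leI ennreal_neg)
    also have "\<dots> \<le> (\<Sum>k. ennreal (c k) * indicator (cball x0 (r k)) y)"
      by (rule ennreal_le_suminf[of "\<lambda>k. ennreal (c k) * indicator (cball x0 (r k)) y"])
    finally show "ennreal (f y) \<le> (\<Sum>k. ennreal (c k) * indicator (cball x0 (r k)) y)" .
  qed
  also have "\<dots> = (\<Sum>k. \<integral>\<^sup>+y. ennreal (c k) * indicator (cball x0 (r k)) y \<partial>lebesgue)"
  proof (rule nn_integral_suminf)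
    fix k
    have [measurable]: "cball x0 (r k) \<in> sets lebesgue" using lmeasurable_cball fmeasurableD by blast
    show "(\<lambda>y. ennreal (c k) * indicator (cball x0 (r k)) y) \<in> borel_measurable lebesgue" by measurable
  qed
  also have "\<dots> = (\<Sum>k. ennreal (c k * (unit_ball_vol DIM('a) * r k ^ DIM('a))))"
    using c r by (simp add: nn_integral_cmult_indicator emeasure_cball ennreal_mult mult.assoc)
  finally show ?thesis .
qed


lemma summable_geom_ennreal_finite:
  assumes "0 \<le> A" "0 \<le> q" "q < 1"
  shows "(\<Sum>k. ennreal (A * q ^ k)) < \<infinity>"
proof -
  have "summable (\<lambda>k. A * q ^ k)" using assms by (intro summable_mult summable_geometric) auto
  then show ?thesis using assms by (simp add: ennreal_suminf_neq_top less_top)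
qed

lemma local_powr_bound:
  fixes D e :: real
  assumes D: "0 < D" and e: "- real DIM('a) < e" and e0: "e < 0"
  shows "\<exists>C. C < \<infinity> \<and> (\<forall>x::'a::euclidean_space. (\<integral>\<^sup>+y. ennreal (indicator (cball x D) y * norm (x - y) powr e) \<partial>lebesgue) \<le> C)"
proof -
  define N where "N = real DIM('a)"
  define V where "V = unit_ball_vol N"
  have V: "0 \<le> V" unfolding V_def N_def by simp
  define c where "c k = D powr e * 2 powr (- (real k + 1) * e)" for k :: nat
  define r where "r k = D * 2 powr (- real k)" for k :: nat
  have trm: "c k * (V * r k ^ DIM('a)) = (V * D ^ DIM('a) * D powr e * 2 powr (-e)) * (2 powr (- (e + N))) ^ k" for k
  proof -
    have "(2::real) powr (- (real k + 1) * e) * (2 powr (- real k)) ^ DIM('a) = 2 powr (- (real k + 1) * e) * 2 powr (real DIM('a) * (- real k))"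
      by (simp add: powr_power)
    also have "\<dots> = 2 powr (-e) * 2 powr (real k * (- (e + N)))"
      unfolding powr_add[symmetric] N_def by (simp add: algebra_simps)
    also have "\<dots> = 2 powr (-e) * (2 powr (- (e + N))) ^ k"
      by (simp add: powr_power)
    finally have *: "(2::real) powr (- (real k + 1) * e) * (2 powr (- real k)) ^ DIM('a) = 2 powr (-e) * (2 powr (- (e + N))) ^ k" .
    show ?thesis unfolding c_def r_def power_mult_distrib
      using * by (metis (no_types, lifting) mult.assoc mult.left_commute)
  qed
  have fin: "(\<Sum>k. ennreal (c k * (V * r k ^ DIM('a)))) < \<infinity>"
    unfolding trm
  proof (rule summable_geom_ennreal_finite)
    have "(2::real) powr (- (e + N)) < 2 powr 0" using e by (intro powr_less_mono) (auto simp: N_def)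
    then show "(2::real) powr (- (e + N)) < 1" by simp
  qed (use V D in auto)
  have bnd: "(\<integral>\<^sup>+y. ennreal (indicator (cball x D) y * norm (x - y) powr e) \<partial>lebesgue)
       \<le> (\<Sum>k. ennreal (c k * (V * r k ^ DIM('a))))" for x :: 'a
    unfolding V_def N_def
  proof (rule nn_integral_dyadic_le)
    show "0 \<le> c k" for k unfolding c_def by simp
    show "0 \<le> r k" for k unfolding r_def using D by simp
    fix y :: 'a
    show "\<exists>k. indicator (cball x D) y * norm (x - y) powr e \<le> c k * indicator (cball x (r k)) y"
    proof (cases "y \<in> cball x D \<and> y \<noteq> x")
      case False
      then have "indicator (cball x D) y * norm (x - y) powr e = 0" by (auto simp: indicator_def)
      moreover have "0 \<le> c 0 * indicator (cball x (r 0)) y" by (simp add: c_def)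
      ultimately show ?thesis by (intro exI[of _ 0]) linarith
    next
      case True
      define t where "t = norm (x - y)"
      have t: "0 < t" "t \<le> D" using True by (auto simp: t_def dist_norm)
      define l where "l = log 2 (D / t)"
      have l0: "0 \<le> l" unfolding l_def using t by simp
      define k where "k = nat \<lfloor>l\<rfloor>"
      have kl: "real k \<le> l" "l < real k + 1" unfolding k_def using l0 by linarith+
      have "2 powr real k \<le> 2 powr l" using kl by simp
      also have "\<dots> = D / t" unfolding l_def using t D by simp
      finally have "t \<le> r k" unfolding r_def using t by (simp add: powr_minus field_simps)
      have "D / t = 2 powr l" unfolding l_def using t D by simp
      also have "\<dots> < 2 powr (real k + 1)" using kl by simp
      finally have "D / 2 powr (real k + 1) < t" using t by (simp add: pos_divide_less_eq mult.commute)
      moreover have "D * 2 powr (- (real k + 1)) = D / 2 powr (real k + 1)" by (simp only: powr_minus divide_inverse)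
      ultimately have "D * 2 powr (- (real k + 1)) < t" by simp
      then have "t powr e \<le> (D * 2 powr (- (real k + 1))) powr e"
        using e0 D by (intro powr_mono2') auto
      also have "\<dots> = c k" unfolding c_def using D by (simp add: powr_mult powr_powr)
      finally show ?thesis using True \<open>t \<le> r k\<close>
        by (intro exI[of _ k]) (auto simp: t_def dist_norm indicator_def norm_minus_commute)
    qed
  qed
  show ?thesis using bnd fin by blast
qed

lemma tail_powr_finite:
  fixes a :: real
  assumes a: "real DIM('a) < a"
  shows "(\<integral>\<^sup>+y. ennreal (1 / (1 + norm y) powr a) \<partial>(lebesgue :: 'a::euclidean_space measure)) < \<infinity>"
proof -
  define N where "N = real DIM('a)"
  define V where "V = unit_ball_vol N"
  have V: "0 \<le> V" unfolding V_def N_def by simp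
  define c where "c k = 2 powr ((1 - real k) * a)" for k :: nat
  define r where "r k = 2 powr (real k)" for k :: nat
  have trm: "c k * (V * r k ^ DIM('a)) = (V * 2 powr a) * (2 powr (N - a)) ^ k" for k
  proof -
    have "(2::real) powr ((1 - real k) * a) * (2 powr real k) ^ DIM('a) = 2 powr ((1 - real k) * a) * 2 powr (real DIM('a) * real k)"
      by (simp add: powr_power)
    also have "\<dots> = 2 powr a * 2 powr (real k * (N - a))"
      unfolding powr_add[symmetric] N_def by (simp add: algebra_simps)
    also have "\<dots> = 2 powr a * (2 powr (N - a)) ^ k"
      by (simp add: powr_power)
    finally have *: "(2::real) powr ((1 - real k) * a) * (2 powr real k) ^ DIM('a) = 2 powr a * (2 powr (N - a)) ^ k" .
    show ?thesis unfolding c_def r_def using * by (metis (no_types, lifting) mult.assoc mult.left_commute)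
  qed
  have fin: "(\<Sum>k. ennreal (c k * (V * r k ^ DIM('a)))) < \<infinity>"
    unfolding trm
  proof (rule summable_geom_ennreal_finite)
    have "(2::real) powr (N - a) < 2 powr 0" using a by (intro powr_less_mono) (auto simp: N_def)
    then show "(2::real) powr (N - a) < 1" by simp
  qed (use V in auto)
  have "(\<integral>\<^sup>+y. ennreal (1 / (1 + norm y) powr a) \<partial>(lebesgue :: 'a measure))
       \<le> (\<Sum>k. ennreal (c k * (V * r k ^ DIM('a))))"
    unfolding V_def N_def
  proof (rule nn_integral_dyadic_le)
    show "0 \<le> c k" for k unfolding c_def by simp
    show "0 \<le> r k" for k unfolding r_def by simp
    fix y :: 'a
    define t where "t = 1 + norm y"
    have t: "1 \<le> t" unfolding t_def by simp
    define l where "l = log 2 t"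
    have l0: "0 \<le> l" unfolding l_def using t by simp
    define k where "k = nat \<lceil>l\<rceil>"
    have kl: "l \<le> real k" "real k < l + 1" unfolding k_def using l0 by linarith+
    have "t = 2 powr l" unfolding l_def using t by simp
    also have "\<dots> \<le> 2 powr real k" using kl by simp
    finally have tk: "t \<le> r k" unfolding r_def .
    have "2 powr real k < 2 powr (l + 1)" using kl by simp
    also have "\<dots> = 2 * t" unfolding l_def using t by (simp add: powr_add)
    finally have "2 powr (real k - 1) \<le> t" by (simp add: powr_diff)
    then have "(2 powr (real k - 1)) powr a \<le> t powr a" using a by (intro powr_mono2) (auto simp: N_def)
    moreover have "0 < t powr a" using t by simp
    moreover have "0 < (2 powr (real k - 1)) powr a" by simp
    ultimately have "1 / t powr a \<le> 1 / (2 powr (real k - 1)) powr a"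
      by (intro divide_left_mono) simp_all
    also have "\<dots> = c k" unfolding c_def by (simp add: powr_powr powr_minus[symmetric] divide_powr_uminus algebra_simps)
    finally show "\<exists>k. 1 / (1 + norm y) powr a \<le> c k * indicator (cball 0 (r k)) y"
      using tk by (intro exI[of _ k]) (auto simp: t_def indicator_def)
  qed
  then show ?thesis using fin by (meson le_less_trans)
qed


lemma line_lipschitz:
  fixes \<phi> g :: "'a::euclidean_space \<Rightarrow> real" and i :: 'a
  assumes d: "\<And>x. ((\<lambda>t. \<phi> (x + t *\<^sub>R i)) has_real_derivative g x) (at 0)"
    and B: "\<And>x. \<bar>g x\<bar> \<le> B"
  shows "\<bar>\<phi> (x + t *\<^sub>R i) - \<phi> x\<bar> \<le> B * \<bar>t\<bar>"
proof -
  define h where "h t = \<phi> (x + t *\<^sub>R i)" for t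
  have "(h has_real_derivative g (x + z *\<^sub>R i)) (at z within UNIV)" for z
  proof -
    have "((\<lambda>\<tau>. \<phi> ((x + z *\<^sub>R i) + \<tau> *\<^sub>R i)) has_real_derivative g (x + z *\<^sub>R i)) (at 0)" by (rule d)
    moreover have "(\<lambda>\<tau>. \<phi> ((x + z *\<^sub>R i) + \<tau> *\<^sub>R i)) = (\<lambda>\<tau>. h (\<tau> + z))"
      unfolding h_def by (auto simp: algebra_simps)
    ultimately have "((\<lambda>\<tau>. h (\<tau> + z)) has_real_derivative g (x + z *\<^sub>R i)) (at 0)" by simp
    then show ?thesis using DERIV_shift[of h "g (x + z *\<^sub>R i)" 0 z] by simp
  qed
  then have "norm (h t - h 0) \<le> B * norm (t - 0)"
    by (intro field_differentiable_bound[where S=UNIV]) (auto simp: B)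
  then show ?thesis unfolding h_def by simp
qed

lemma smooth_compact_lipschitz:
  fixes \<phi> :: "'a::euclidean_space \<Rightarrow> real"
  assumes sm: "smooth_fun \<phi>" and K: "compact K" and z: "\<And>x. x \<notin> K \<Longrightarrow> \<phi> x = 0"
  shows "\<exists>L. 0 \<le> L \<and> (\<forall>x y. \<bar>\<phi> x - \<phi> y\<bar> \<le> L * norm (x - y))"
proof -
  obtain S where S: "\<phi> \<in> S" "\<And>g. g \<in> S \<Longrightarrow> continuous_on UNIV g \<and>
      (\<forall>i\<in>Basis. \<exists>g'\<in>S. \<forall>x. ((\<lambda>t. g (x + t *\<^sub>R i)) has_real_derivative g' x) (at 0))"
    using sm unfolding smooth_fun_def by blast
  have "\<forall>i\<in>Basis. \<exists>B. 0 \<le> B \<and> (\<forall>x t. \<bar>\<phi> (x + t *\<^sub>R i) - \<phi> x\<bar> \<le> B * \<bar>t\<bar>)"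
  proof
    fix i :: 'a assume i: "i \<in> Basis"
    obtain g where g: "g \<in> S" "\<And>x. ((\<lambda>t. \<phi> (x + t *\<^sub>R i)) has_real_derivative g x) (at 0)"
      using S i by blast
    have gc: "continuous_on UNIV g" using S(2) g(1) by blast
    have g0: "g x = 0" if x: "x \<notin> K" for x
    proof -
      have "open (- K)" using K by (simp add: compact_imp_closed open_Compl)
      then obtain \<rho> where \<rho>: "\<rho> > 0" "ball x \<rho> \<subseteq> - K" using x by (meson ComplI open_contains_ball)
      have "eventually (\<lambda>t. \<phi> (x + t *\<^sub>R i) = 0) (nhds 0)"
      proof (rule eventually_nhds_metric[THEN iffD2], intro exI conjI allI impI)
        show "0 < \<rho>" by fact
        fix t :: real assume "dist t 0 < \<rho>"
        then have "x + t *\<^sub>R i \<in> ball x \<rho>" using i by (simp add: dist_norm)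
        then show "\<phi> (x + t *\<^sub>R i) = 0" using \<rho> z by blast
      qed
      then have "((\<lambda>t. \<phi> (x + t *\<^sub>R i)) has_real_derivative g x) (at 0) = ((\<lambda>t. 0) has_real_derivative g x) (at 0)"
        by (intro DERIV_cong_ev) auto
      then have "((\<lambda>t::real. 0::real) has_real_derivative g x) (at 0)" using g(2) by simp
      then show ?thesis using DERIV_const DERIV_unique by blast
    qed
    have "bounded (g ` K)" using K gc by (meson compact_continuous_image compact_imp_bounded continuous_on_subset subset_UNIV)
    then obtain B where B: "\<And>x. x \<in> K \<Longrightarrow> \<bar>g x\<bar> \<le> B" by (auto simp: bounded_iff)
    have B': "\<bar>g x\<bar> \<le> max B 0" for x using B g0 by (cases "x \<in> K") fastforce+
    show "\<exists>B. 0 \<le> B \<and> (\<forall>x t. \<bar>\<phi> (x + t *\<^sub>R i) - \<phi> x\<bar> \<le> B * \<bar>t\<bar>)"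
      by (intro exI[of _ "max B 0"] conjI allI line_lipschitz[OF g(2) B']) auto
  qed
  then obtain B where B: "\<And>i. i \<in> Basis \<Longrightarrow> 0 \<le> B i" "\<And>i x t. i \<in> Basis \<Longrightarrow> \<bar>\<phi> (x + t *\<^sub>R i) - \<phi> x\<bar> \<le> B i * \<bar>t\<bar>"
    by metis
  have ind: "T \<subseteq> Basis \<Longrightarrow> \<bar>\<phi> (x + (\<Sum>i\<in>T. c i *\<^sub>R i)) - \<phi> x\<bar> \<le> (\<Sum>i\<in>T. B i * \<bar>c i\<bar>)" for T x c
  proof (induction T arbitrary: x rule: infinite_finite_induct)
    case (insert j T)
    have "\<bar>\<phi> (x + (\<Sum>i\<in>insert j T. c i *\<^sub>R i)) - \<phi> x\<bar>
       = \<bar>(\<phi> ((x + (\<Sum>i\<in>T. c i *\<^sub>R i)) + c j *\<^sub>R j) - \<phi> (x + (\<Sum>i\<in>T. c i *\<^sub>R i))) + (\<phi> (x + (\<Sum>i\<in>T. c i *\<^sub>R i)) - \<phi> x)\<bar>"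
      using insert by (simp add: algebra_simps)
    also have "\<dots> \<le> B j * \<bar>c j\<bar> + (\<Sum>i\<in>T. B i * \<bar>c i\<bar>)"
      using B(2)[of j "x + (\<Sum>i\<in>T. c i *\<^sub>R i)" "c j"] insert by (intro order.trans[OF abs_triangle_ineq add_mono]) auto
    also have "\<dots> = (\<Sum>i\<in>insert j T. B i * \<bar>c i\<bar>)" using insert by simp
    finally show ?case .
  qed (use finite_Basis in auto)
  show ?thesis
  proof (intro exI[of _ "\<Sum>i\<in>Basis. B i"] conjI allI)
    show "0 \<le> (\<Sum>i\<in>Basis. B i)" using B(1) by (simp add: sum_nonneg)
    fix x y :: 'a
    have "\<bar>\<phi> (y + (\<Sum>i\<in>Basis. ((x - y) \<bullet> i) *\<^sub>R i)) - \<phi> y\<bar> \<le> (\<Sum>i\<in>Basis. B i * \<bar>(x - y) \<bullet> i\<bar>)"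
      by (rule ind) simp
    also have "\<dots> \<le> (\<Sum>i\<in>Basis. B i * norm (x - y))"
      using B(1) by (intro sum_mono mult_left_mono) (auto simp: Basis_le_norm)
    finally show "\<bar>\<phi> x - \<phi> y\<bar> \<le> (\<Sum>i\<in>Basis. B i) * norm (x - y)"
      by (simp add: euclidean_representation sum_distrib_right)
  qed
qed


lemma sigma_finite_lebesgue: "sigma_finite_measure (lebesgue :: 'a::euclidean_space measure)"
proof
  show "\<exists>A. countable A \<and> A \<subseteq> sets (lebesgue::'a measure) \<and> \<Union> A = space lebesgue \<and> (\<forall>a\<in>A. emeasure lebesgue a \<noteq> \<infinity>)"
  proof (intro exI conjI)
    show "countable (range (\<lambda>n::nat. cball (0::'a) (real n)))" by simp
    show "range (\<lambda>n::nat. cball (0::'a) (real n)) \<subseteq> sets lebesgue" using lmeasurable_cball fmeasurableD by blast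
    show "\<Union> (range (\<lambda>n::nat. cball (0::'a) (real n))) = space lebesgue"
      by (auto simp: real_arch_simple)
    show "\<forall>a\<in>range (\<lambda>n::nat. cball (0::'a) (real n)). emeasure lebesgue a \<noteq> \<infinity>"
      by (auto simp: emeasure_cball)
  qed
qed

interpretation lebesgue: sigma_finite_measure "lebesgue :: 'a::euclidean_space measure"
  by (rule sigma_finite_lebesgue)

interpretation lebesgue_pair: pair_sigma_finite "lebesgue :: 'a::euclidean_space measure" "lebesgue :: 'a measure" ..

lemma spow_abs: "\<bar>spow a q\<bar> = \<bar>a\<bar> powr q"
  by (simp add: spow_def abs_mult abs_sgn_eq) 

lemma spow_minus: "spow (- a) q = - spow a q"
  by (simp add: spow_def)

lemma powr_mult_le_sum:
  fixes \<alpha> \<beta> q :: real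
  assumes "0 \<le> \<alpha>" "0 \<le> \<beta>" "1 < q"
  shows "\<alpha> powr (q - 1) * \<beta> \<le> \<alpha> powr q + \<beta> powr q"
proof (cases "\<beta> \<le> \<alpha>")
  case True
  show ?thesis
  proof (cases "\<alpha> = 0")
    case False
    have "\<alpha> powr (q - 1) * \<beta> \<le> \<alpha> powr (q - 1) * \<alpha>" using True assms by (intro mult_left_mono) auto
    also have "\<dots> = \<alpha> powr q" using False assms by (simp add: powr_diff)
    finally show ?thesis by (smt (verit) powr_ge_zero)
  qed (use assms in simp)
next
  case False
  then have "\<alpha> powr (q - 1) * \<beta> \<le> \<beta> powr (q - 1) * \<beta>" using assms by (intro mult_right_mono powr_mono2) auto
  also have "\<dots> = \<beta> powr q" using False assms by (simp add: powr_diff)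
  finally show ?thesis by (smt (verit) powr_ge_zero)
qed

lemma abs_diff_powr_le:
  fixes a b q :: real
  assumes "0 < q"
  shows "\<bar>a - b\<bar> powr q \<le> 2 powr q * (\<bar>a\<bar> powr q + \<bar>b\<bar> powr q)"
proof -
  have "\<bar>a - b\<bar> \<le> 2 * max \<bar>a\<bar> \<bar>b\<bar>" by linarith
  then have "\<bar>a - b\<bar> powr q \<le> (2 * max \<bar>a\<bar> \<bar>b\<bar>) powr q" using assms by (intro powr_mono2) auto
  also have "\<dots> = 2 powr q * max \<bar>a\<bar> \<bar>b\<bar> powr q" by (simp add: powr_mult)
  also have "max \<bar>a\<bar> \<bar>b\<bar> powr q \<le> \<bar>a\<bar> powr q + \<bar>b\<bar> powr q" by (cases "\<bar>a\<bar> \<le> \<bar>b\<bar>") (auto simp: max_def)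
  then have "2 powr q * max \<bar>a\<bar> \<bar>b\<bar> powr q \<le> 2 powr q * (\<bar>a\<bar> powr q + \<bar>b\<bar> powr q)" by simp
  finally show ?thesis .
qed

lemma powr_le_one_plus:
  fixes x p :: real
  assumes "1 < p" "0 \<le> x"
  shows "x powr (p - 1) \<le> 1 + x powr p"
proof (cases "x \<le> 1")
  case True
  then have "x powr (p - 1) \<le> 1 powr (p - 1)" using assms by (intro powr_mono2) auto
  then have "x powr (p - 1) \<le> 1" by simp
  then show ?thesis by (smt (verit) powr_ge_zero)
next
  case False
  then have "x powr (p - 1) \<le> x powr p" using assms by (intro powr_mono) auto
  then show ?thesis by linarith
qed

lemma nn_integral_prod_split:
  fixes f g :: "'a::euclidean_space \<Rightarrow> real"
  assumes [measurable]: "f \<in> borel_measurable lebesgue" "g \<in> borel_measurable lebesgue"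
    and "\<And>x. 0 \<le> f x" "\<And>x. 0 \<le> g x"
  shows "(\<integral>\<^sup>+z. ennreal (f (fst z) * g (snd z)) \<partial>(lebesgue \<Otimes>\<^sub>M lebesgue))
      = (\<integral>\<^sup>+x. ennreal (f x) \<partial>lebesgue) * (\<integral>\<^sup>+y. ennreal (g y) \<partial>lebesgue)"
proof -
  have "(\<integral>\<^sup>+z. ennreal (f (fst z) * g (snd z)) \<partial>(lebesgue \<Otimes>\<^sub>M lebesgue))
     = (\<integral>\<^sup>+x. \<integral>\<^sup>+y. ennreal (f x * g y) \<partial>lebesgue \<partial>lebesgue)"
    by (subst lebesgue.nn_integral_fst[symmetric]) (auto)
  also have "\<dots> = (\<integral>\<^sup>+x. ennreal (f x) * (\<integral>\<^sup>+y. ennreal (g y) \<partial>lebesgue) \<partial>lebesgue)"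
    using assms by (simp add: ennreal_mult nn_integral_cmult)
  also have "\<dots> = (\<integral>\<^sup>+x. ennreal (f x) \<partial>lebesgue) * (\<integral>\<^sup>+y. ennreal (g y) \<partial>lebesgue)"
    by (simp add: nn_integral_multc)
  finally show ?thesis .
qed

lemma local_powr_bound_all:
  fixes D e :: real
  assumes D: "0 < D" and e: "- real DIM('a) < e"
  shows "\<exists>C. C < \<infinity> \<and> (\<forall>x::'a::euclidean_space. (\<integral>\<^sup>+y. ennreal (indicator (cball x D) y * norm (x - y) powr e) \<partial>lebesgue) \<le> C)"
proof (cases "e < 0")
  case True
  then show ?thesis using local_powr_bound[OF D e] by blast
next
  case False
  show ?thesis
  proof (intro exI conjI allI)
    fix x :: 'a
    have "(\<integral>\<^sup>+y. ennreal (indicator (cball x D) y * norm (x - y) powr e) \<partial>lebesgue)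
        \<le> (\<integral>\<^sup>+y. ennreal (D powr e) * indicator (cball x D) y \<partial>lebesgue)"
    proof (rule nn_integral_mono)
      fix y :: 'a
      have "norm (x - y) powr e \<le> D powr e" if "y \<in> cball x D"
        using that False by (intro powr_mono2) (auto simp: dist_norm)
      then show "ennreal (indicator (cball x D) y * norm (x - y) powr e) \<le> ennreal (D powr e) * indicator (cball x D) y"
        by (cases "y \<in> cball x D") (auto simp: ennreal_leI)
    qed
    also have "\<dots> = ennreal (D powr e) * ennreal (unit_ball_vol DIM('a) * D ^ DIM('a))"
      using D lmeasurable_cball[of x D] by (simp add: nn_integral_cmult_indicator fmeasurableD emeasure_cball)
    finally show "(\<integral>\<^sup>+y. ennreal (indicator (cball x D) y * norm (x - y) powr e) \<partial>lebesgue)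
        \<le> ennreal (D powr e) * ennreal (unit_ball_vol DIM('a) * D ^ DIM('a))" .
  qed (simp add: ennreal_mult_less_top)
qed

lemma id_lebesgue_borel[measurable]: "(\<lambda>x::'a::euclidean_space. x) \<in> borel_measurable lebesgue"
  by (rule borel_to_lebesgue) simp
lemma lebesgue_fst_borel[measurable]: "fst \<in> (lebesgue \<Otimes>\<^sub>M lebesgue :: ('a::euclidean_space \<times> 'a) measure) \<rightarrow>\<^sub>M borel"
  by (rule measurable_compose[OF measurable_fst id_lebesgue_borel])
lemma lebesgue_snd_borel[measurable]: "snd \<in> (lebesgue \<Otimes>\<^sub>M lebesgue :: ('a::euclidean_space \<times> 'a) measure) \<rightarrow>\<^sub>M borel"
  by (rule measurable_compose[OF measurable_snd id_lebesgue_borel])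




theorem lemma2p5:
  fixes s p :: real and \<Omega> :: "'a::euclidean_space set"
    and u f :: "'a \<Rightarrow> real" and A :: "real \<Rightarrow> ('a \<times> 'a) set"
  assumes s: "0 < s" "s < 1" and p: "1 < p"
    and \<Omega>: "open \<Omega>"
    and u: "tW_loc s p \<Omega> u"
    and f: "L1_loc \<Omega> f"
    and A_nbhd: "\<And>\<epsilon>. \<epsilon> > 0 \<Longrightarrow> \<exists>V. open V \<and> diag \<subseteq> V \<and> V \<subseteq> A \<epsilon>"
    and A_meas: "\<And>\<epsilon>. \<epsilon> > 0 \<Longrightarrow> A \<epsilon> \<in> sets (lebesgue \<Otimes>\<^sub>M lebesgue)"
    and A_sym: "\<And>\<epsilon> x y. \<epsilon> > 0 \<Longrightarrow> (x, y) \<in> A \<epsilon> \<Longrightarrow> (y, x) \<in> A \<epsilon>"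
    and A_haus: "((\<lambda>\<epsilon>. hausdist_ext (A \<epsilon>) diag) \<longlongrightarrow> 0) (at_right 0)"
    and conv: "L1_loc_tendsto \<Omega>
       (\<lambda>\<epsilon> x. 2 * (LINT y:(UNIV - {y. (x, y) \<in> A \<epsilon>})|lebesgue.
            spow (u x - u y) (p - 1) / norm (x - y) powr (real DIM('a) + p * s))) f"
    and \<phi>: "test_fun \<Omega> \<phi>"
  shows "(LINT z|(lebesgue \<Otimes>\<^sub>M lebesgue).
            spow (u (fst z) - u (snd z)) (p - 1) * (\<phi> (fst z) - \<phi> (snd z))
              / norm (fst z - snd z) powr (real DIM('a) + p * s))
         = (LINT x:\<Omega>|lebesgue. f x * \<phi> x)"
proof -
  define N where "N = real DIM('a)"
  define a where "a = N + p * s"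
  have N1: "1 \<le> N" unfolding N_def by (simp add: DIM_positive Suc_le_eq)
  have aN: "N < a" using s p unfolding a_def by simp
  have pa: "- N < p - a" using s p unfolding a_def by (simp add: algebra_simps mult_less_cancel_left1)
  have a0: "0 < a" using aN N1 by simp
  define K where "K = closure {x. \<phi> x \<noteq> 0}"
  have sm: "smooth_fun \<phi>" and Kc: "compact K" and K\<Omega>: "K \<subseteq> \<Omega>" using \<phi> unfolding test_fun_def K_def by auto
  have \<phi>0: "\<phi> x = 0" if "x \<notin> K" for x using that closure_subset[of "{x. \<phi> x \<noteq> 0}"] unfolding K_def by auto
  obtain L where L: "0 \<le> L" "\<And>x y. \<bar>\<phi> x - \<phi> y\<bar> \<le> L * norm (x - y)"
    using smooth_compact_lipschitz[OF sm Kc \<phi>0] by blast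
  have \<phi>cont: "continuous_on UNIV \<phi>"
  proof -
    obtain S where S: "\<phi> \<in> S" "\<And>g. g \<in> S \<Longrightarrow> continuous_on UNIV g \<and>
      (\<forall>i\<in>Basis. \<exists>g'\<in>S. \<forall>x. ((\<lambda>t. g (x + t *\<^sub>R i)) has_real_derivative g' x) (at 0))"
      using sm unfolding smooth_fun_def by blast
    show ?thesis using S(2)[OF S(1)] by (rule conjunct1)
  qed
  have \<phi>meas[measurable]: "\<phi> \<in> borel_measurable lebesgue"
    by (intro borel_to_lebesgue borel_measurable_continuous_onI \<phi>cont)
  obtain M where M: "0 \<le> M" "\<And>x. \<bar>\<phi> x\<bar> \<le> M"
  proof -
    have "bounded (\<phi> ` K)" using Kc \<phi>cont
      by (meson compact_continuous_image compact_imp_bounded continuous_on_subset subset_UNIV)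
    then obtain B where B: "\<And>x. x \<in> K \<Longrightarrow> \<bar>\<phi> x\<bar> \<le> B" by (auto simp: bounded_iff)
    have "\<bar>\<phi> x\<bar> \<le> max B 0" for x using B \<phi>0 by (cases "x \<in> K") fastforce+
    then show ?thesis using that[of "max B 0"] by simp
  qed
  obtain R where R: "0 < R" "K \<subseteq> ball 0 R" using bounded_subset_ballD[OF compact_imp_bounded[OF Kc]] by blast
  define \<Omega>' where "\<Omega>' = \<Omega> \<inter> ball 0 R"
  have "open \<Omega>'" "bounded \<Omega>'" "\<Omega>' \<subseteq> \<Omega>" unfolding \<Omega>'_def using \<Omega> by auto
  then have "tW s p \<Omega>' u" using u unfolding tW_loc_def by blast
  then obtain U where Lp: "Lp_loc p u" and U: "open U" "bounded U" "closure \<Omega>' \<subseteq> U"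
    and W: "in_Wsp s p U u"
    and tail: "(\<integral>\<^sup>+x. ennreal (\<bar>u x\<bar> powr (p - 1) / (1 + norm x) powr (real DIM('a) + p * s)) \<partial>lebesgue) < \<infinity>"
    unfolding tW_def by blast
  have "K \<subseteq> \<Omega>'" using K\<Omega> R(2) unfolding \<Omega>'_def by auto
  then have KU: "K \<subseteq> U" using U(3) closure_subset by blast
  have umeas[measurable]: "u \<in> borel_measurable lebesgue" using Lp unfolding Lp_loc_def by blast
  obtain \<delta> where \<delta>: "0 < \<delta>" "(\<Union>x\<in>K. cball x \<delta>) \<subseteq> U"
    using compact_subset_open_imp_cball_epsilon_subset[OF Kc U(1) KU] by blast
  obtain RU where RU: "0 < RU" "U \<subseteq> ball 0 RU" using bounded_subset_ballD[OF U(2)] by blast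
  have Kmeas[measurable]: "K \<in> sets lebesgue" using Kc by (simp add: compact_imp_closed)
  have Umeas[measurable]: "U \<in> sets lebesgue" using U(1) by simp
  have Kfin: "emeasure lebesgue K < \<infinity>"
    using lmeasurable_compact[OF Kc] by (simp add: fmeasurable_def)
  have Ufin: "emeasure lebesgue U < \<infinity>"
    using lmeasurable_open[OF U(2,1)] by (simp add: fmeasurable_def)
  have Ksub: "(\<integral>\<^sup>+x\<in>K. ennreal (\<bar>u x\<bar> powr p) \<partial>lebesgue) < \<infinity>"
    using Lp Kc unfolding Lp_loc_def by blast
  define G where "G r z = indicator K (fst z) * indicator {z. r \<le> norm (fst z - snd z)} z *
      (\<bar>u (fst z)\<bar> powr (p - 1) + \<bar>u (snd z)\<bar> powr (p - 1)) / norm (fst z - snd z) powr a" for r z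
  have Gmeas[measurable]: "G r \<in> borel_measurable (lebesgue \<Otimes>\<^sub>M lebesgue)" for r
    unfolding G_def by measurable
  have Gnn: "0 \<le> G r z" for r z unfolding G_def by simp
  define w where "w y = 1 / (1 + norm y) powr a" for y :: 'a
  have wmeas[measurable]: "w \<in> borel_measurable lebesgue" unfolding w_def by measurable
  have wfin: "(\<integral>\<^sup>+y. ennreal (w y) \<partial>lebesgue) < \<infinity>" unfolding w_def by (rule tail_powr_finite) (use aN N_def in simp)
  define f1 where "f1 x = indicator K x * \<bar>u x\<bar> powr (p - 1)" for x
  have f1meas[measurable]: "f1 \<in> borel_measurable lebesgue" unfolding f1_def by measurable
  have f1fin: "(\<integral>\<^sup>+x. ennreal (f1 x) \<partial>lebesgue) < \<infinity>"
  proof -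
    have "(\<integral>\<^sup>+x. ennreal (f1 x) \<partial>lebesgue) \<le> (\<integral>\<^sup>+x. indicator K x + ennreal (\<bar>u x\<bar> powr p) * indicator K x \<partial>lebesgue)"
    proof (rule nn_integral_mono)
      fix x
      have "f1 x \<le> indicator K x * (1 + \<bar>u x\<bar> powr p)"
        unfolding f1_def using powr_le_one_plus[OF p, of "\<bar>u x\<bar>"] by (simp add: indicator_def)
      show "ennreal (f1 x) \<le> indicator K x + ennreal (\<bar>u x\<bar> powr p) * indicator K x"
      proof (cases "x \<in> K")
        case True
        then have "ennreal (f1 x) \<le> ennreal (1 + \<bar>u x\<bar> powr p)" using \<open>f1 x \<le> _\<close> by (intro ennreal_leI) simp
        also have "\<dots> = 1 + ennreal (\<bar>u x\<bar> powr p)" by (subst ennreal_plus) auto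
        finally show ?thesis using True by simp
      next
        case False
        then show ?thesis by (simp add: f1_def)
      qed
    qed
    also have "\<dots> = emeasure lebesgue K + (\<integral>\<^sup>+x\<in>K. ennreal (\<bar>u x\<bar> powr p) \<partial>lebesgue)"
      by (subst nn_integral_add) auto
    also have "\<dots> < \<infinity>" using Kfin Ksub by (simp add: ennreal_add_less_top)
    finally show ?thesis .
  qed
  define g2 where "g2 y = \<bar>u y\<bar> powr (p - 1) * w y" for y
  have g2meas[measurable]: "g2 \<in> borel_measurable lebesgue" unfolding g2_def by measurable
  have g2fin: "(\<integral>\<^sup>+y. ennreal (g2 y) \<partial>lebesgue) < \<infinity>"
    using tail unfolding g2_def w_def a_def N_def by simp
  have int1: "integrable (lebesgue \<Otimes>\<^sub>M lebesgue) (\<lambda>z. f1 (fst z) * w (snd z))"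
  proof (rule integrableI_nonneg)
    show "AE z in lebesgue \<Otimes>\<^sub>M lebesgue. 0 \<le> f1 (fst z) * w (snd z)"
      by (auto simp: f1_def w_def)
    show "(\<integral>\<^sup>+z. ennreal (f1 (fst z) * w (snd z)) \<partial>(lebesgue \<Otimes>\<^sub>M lebesgue)) < \<infinity>"
      by (subst nn_integral_prod_split) (use f1fin wfin in \<open>auto simp: f1_def w_def ennreal_mult_less_top\<close>)
  qed measurable
  have Kfin': "(\<integral>\<^sup>+x. ennreal (indicator K x) \<partial>lebesgue) < \<infinity>"
  proof -
    have "(\<integral>\<^sup>+x. ennreal (indicator K x) \<partial>lebesgue) = (\<integral>\<^sup>+x. indicator K x \<partial>lebesgue)"
      by (intro nn_integral_cong) (simp add: indicator_def)
    also have "\<dots> = emeasure lebesgue K" by (rule nn_integral_indicator) simp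
    finally show ?thesis using Kfin by (simp only:)
  qed
  have int2: "integrable (lebesgue \<Otimes>\<^sub>M lebesgue) (\<lambda>z. indicator K (fst z) * g2 (snd z))"
  proof (rule integrableI_nonneg)
    show "AE z in lebesgue \<Otimes>\<^sub>M lebesgue. 0 \<le> indicator K (fst z) * g2 (snd z)"
      by (auto simp: g2_def w_def)
    show "(\<integral>\<^sup>+z. ennreal (indicator K (fst z) * g2 (snd z)) \<partial>(lebesgue \<Otimes>\<^sub>M lebesgue)) < \<infinity>"
      by (subst nn_integral_prod_split) (use Kfin' g2fin in \<open>auto simp: g2_def w_def ennreal_mult_less_top\<close>)
  qed measurable
  have Gint: "integrable (lebesgue \<Otimes>\<^sub>M lebesgue) (G r)" if r: "0 < r" for r
  proof -
    define c where "c = ((1 + R) / r + 1) powr a"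
    have c0: "0 \<le> c" unfolding c_def by simp
    have iB: "integrable (lebesgue \<Otimes>\<^sub>M lebesgue) (\<lambda>z. c * (f1 (fst z) * w (snd z) + indicator K (fst z) * g2 (snd z)))"
      using int1 int2 by auto
    have bnd: "AE z in lebesgue \<Otimes>\<^sub>M lebesgue. norm (G r z) \<le> norm (c * (f1 (fst z) * w (snd z) + indicator K (fst z) * g2 (snd z)))"
      proof (rule AE_I2)
        fix z :: "'a \<times> 'a"
        obtain x y where z: "z = (x, y)" by (cases z)
        have rhs0: "0 \<le> c * (f1 x * w y + indicator K x * g2 y)"
          using c0 by (auto simp: f1_def w_def g2_def)
        have "G r (x, y) \<le> c * (f1 x * w y + indicator K x * g2 y)"
        proof (cases "x \<in> K \<and> r \<le> norm (x - y)")
          case False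
          then have "G r (x, y) = 0" unfolding G_def by auto
          then show ?thesis using rhs0 by simp
        next
          case True
          define d where "d = norm (x - y)"
          have d: "r \<le> d" "0 < d" using True r unfolding d_def by auto
          have nx: "norm x < R" using True R by auto
          have "1 + norm y \<le> 1 + norm x + d" unfolding d_def using norm_triangle_ineq4[of x y] norm_minus_commute
            using norm_triangle_ineq3[of x y] by (simp add: norm_minus_commute)
          also have "\<dots> \<le> ((1 + R) / r + 1) * d"
          proof -
            have e1: "(1 + R) * r \<le> (1 + R) * d" using d R(1) by (intro mult_left_mono) auto
            have "1 + R \<le> (1 + R) * d / r" using e1 r by (simp add: pos_le_divide_eq)
            then have "1 + R \<le> (1 + R) / r * d" by (simp add: times_divide_eq_left)
            then show ?thesis using nx by (simp add: algebra_simps)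
          qed
          finally have "(1 + norm y) powr a \<le> (((1 + R) / r + 1) * d) powr a"
            using a0 by (intro powr_mono2) auto
          also have "\<dots> = c * d powr a" unfolding c_def using r R(1) d by (simp add: powr_mult)
          finally have cy: "(1 + norm y) powr a \<le> c * d powr a" .
          have "1 / d powr a \<le> c * w y"
          proof -
            have "0 < 1 + norm y" by (simp add: add_pos_nonneg)
            then have pos: "0 < (1 + norm y) powr a" by simp
            have "1 / d powr a = ((1 + norm y) powr a) / ((1 + norm y) powr a * d powr a)" using pos d by simp
            also have "\<dots> \<le> (c * d powr a) / ((1 + norm y) powr a * d powr a)"
              using cy pos d by (intro divide_right_mono) auto
            also have "\<dots> = c * w y" unfolding w_def using d by simp
            finally show ?thesis .
          qed
          then have "(\<bar>u x\<bar> powr (p - 1) + \<bar>u y\<bar> powr (p - 1)) * (1 / d powr a) \<le> (\<bar>u x\<bar> powr (p - 1) + \<bar>u y\<bar> powr (p - 1)) * (c * w y)"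
            by (intro mult_left_mono) auto
          then show ?thesis using True unfolding G_def f1_def g2_def d_def by (simp add: algebra_simps add_divide_distrib)
        qed
        then show "norm (G r z) \<le> norm (c * (f1 (fst z) * w (snd z) + indicator K (fst z) * g2 (snd z)))"
          using Gnn[of r z] rhs0 z by simp
      qed
    show ?thesis by (rule Bochner_Integration.integrable_bound[OF iB Gmeas bnd])
  qed
  have UUmeas[measurable]: "U \<times> U \<in> sets (lebesgue \<Otimes>\<^sub>M lebesgue)" by (intro pair_measureI) simp_all
  have intW: "integrable (lebesgue \<Otimes>\<^sub>M lebesgue) (\<lambda>z. indicator (U \<times> U) z * (\<bar>u (fst z) - u (snd z)\<bar> powr p / norm (fst z - snd z) powr a))"
  proof (rule integrableI_nonneg)
    show "(\<lambda>z. indicator (U \<times> U) z * (\<bar>u (fst z) - u (snd z)\<bar> powr p / norm (fst z - snd z) powr a)) \<in> borel_measurable (lebesgue \<Otimes>\<^sub>M lebesgue)"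
      by measurable
    show "AE z in lebesgue \<Otimes>\<^sub>M lebesgue. 0 \<le> indicator (U \<times> U) z * (\<bar>u (fst z) - u (snd z)\<bar> powr p / norm (fst z - snd z) powr a)"
      by auto
    have "(\<integral>\<^sup>+z. ennreal (indicator (U \<times> U) z * (\<bar>u (fst z) - u (snd z)\<bar> powr p / norm (fst z - snd z) powr a)) \<partial>(lebesgue \<Otimes>\<^sub>M lebesgue))
      = (\<integral>\<^sup>+z\<in>U \<times> U. ennreal (\<bar>u (fst z) - u (snd z)\<bar> powr p / norm (fst z - snd z) powr (real DIM('a) + p * s)) \<partial>(lebesgue \<Otimes>\<^sub>M lebesgue))"
      unfolding a_def N_def by (intro nn_integral_cong) (auto simp: indicator_def)
    also have "\<dots> < \<infinity>" using W unfolding in_Wsp_def by blast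
    finally show "(\<integral>\<^sup>+z. ennreal (indicator (U \<times> U) z * (\<bar>u (fst z) - u (snd z)\<bar> powr p / norm (fst z - snd z) powr a)) \<partial>(lebesgue \<Otimes>\<^sub>M lebesgue)) < \<infinity>" .
  qed
  have "\<exists>C. C < \<infinity> \<and> (\<forall>x::'a. (\<integral>\<^sup>+y. ennreal (indicator (cball x (2 * RU)) y * norm (x - y) powr (p - a)) \<partial>lebesgue) \<le> C)"
    by (rule local_powr_bound_all) (use RU(1) pa in \<open>auto simp: N_def\<close>)
  then obtain CL where CL: "CL < \<infinity>" "\<And>x::'a. (\<integral>\<^sup>+y. ennreal (indicator (cball x (2 * RU)) y * norm (x - y) powr (p - a)) \<partial>lebesgue) \<le> CL"
    by blast
  have intLip: "integrable (lebesgue \<Otimes>\<^sub>M lebesgue) (\<lambda>z. indicator (U \<times> U) z * norm (fst z - snd z) powr (p - a))"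
  proof (rule integrableI_nonneg)
    show "(\<lambda>z. indicator (U \<times> U) z * norm (fst z - snd z) powr (p - a)) \<in> borel_measurable (lebesgue \<Otimes>\<^sub>M lebesgue)"
      by measurable
    show "AE z in lebesgue \<Otimes>\<^sub>M lebesgue. 0 \<le> indicator (U \<times> U) z * norm (fst z - snd z) powr (p - a)"
      by auto
    have "(\<integral>\<^sup>+z. ennreal (indicator (U \<times> U) z * norm (fst z - snd z) powr (p - a)) \<partial>(lebesgue \<Otimes>\<^sub>M lebesgue))
      = (\<integral>\<^sup>+x. \<integral>\<^sup>+y. ennreal (indicator (U \<times> U) (x, y) * norm (x - y) powr (p - a)) \<partial>lebesgue \<partial>lebesgue)"
      by (subst lebesgue.nn_integral_fst[symmetric]) auto
    also have "\<dots> \<le> (\<integral>\<^sup>+x. ennreal (indicator U x) * CL \<partial>lebesgue)"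
    proof (rule nn_integral_mono)
      fix x :: 'a
      have "(\<integral>\<^sup>+y. ennreal (indicator (U \<times> U) (x, y) * norm (x - y) powr (p - a)) \<partial>lebesgue)
          \<le> (\<integral>\<^sup>+y. ennreal (indicator U x) * ennreal (indicator (cball x (2 * RU)) y * norm (x - y) powr (p - a)) \<partial>lebesgue)"
      proof (rule nn_integral_mono)
        fix y :: 'a
        show "ennreal (indicator (U \<times> U) (x, y) * norm (x - y) powr (p - a)) \<le> ennreal (indicator U x) * ennreal (indicator (cball x (2 * RU)) y * norm (x - y) powr (p - a))"
        proof (cases "x \<in> U \<and> y \<in> U")
          case True
          then have "norm x < RU" "norm y < RU" using RU(2) by auto
          then have "dist x y \<le> 2 * RU" by (simp add: dist_norm) (smt (verit) norm_triangle_ineq4)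
          then show ?thesis using True by (simp add: indicator_def)
        next
          case False
          then show ?thesis by (auto simp: indicator_def)
        qed
      qed
      also have "\<dots> = ennreal (indicator U x) * (\<integral>\<^sup>+y. ennreal (indicator (cball x (2 * RU)) y * norm (x - y) powr (p - a)) \<partial>lebesgue)"
      proof (rule nn_integral_cmult)
        have [measurable]: "cball x (2 * RU) \<in> sets lebesgue" using lmeasurable_cball fmeasurableD by blast
        have [measurable]: "(\<lambda>y. norm (x - y) powr (p - a)) \<in> borel_measurable lebesgue"
          by (rule borel_to_lebesgue) measurable
        show "(\<lambda>y. ennreal (indicator (cball x (2 * RU)) y * norm (x - y) powr (p - a))) \<in> borel_measurable lebesgue"
          by measurable
      qed
      also have "\<dots> \<le> ennreal (indicator U x) * CL"
        using CL(2)[of x] by (intro mult_left_mono) auto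
      finally show "(\<integral>\<^sup>+y. ennreal (indicator (U \<times> U) (x, y) * norm (x - y) powr (p - a)) \<partial>lebesgue) \<le> ennreal (indicator U x) * CL" .
    qed
    also have "\<dots> = (\<integral>\<^sup>+x. ennreal (indicator U x) \<partial>lebesgue) * CL"
      by (rule nn_integral_multc) measurable
    also have "(\<integral>\<^sup>+x. ennreal (indicator U x) \<partial>lebesgue) = emeasure lebesgue U"
    proof -
      have "(\<integral>\<^sup>+x. ennreal (indicator U x) \<partial>lebesgue) = (\<integral>\<^sup>+x. indicator U x \<partial>lebesgue)"
        by (intro nn_integral_cong) (simp add: indicator_def)
      also have "\<dots> = emeasure lebesgue U" by (rule nn_integral_indicator) simp
      finally show ?thesis .
    qed
    also have "emeasure lebesgue U * CL < \<infinity>" using Ufin CL(1) by (simp add: ennreal_mult_less_top)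
    finally show "(\<integral>\<^sup>+z. ennreal (indicator (U \<times> U) z * norm (fst z - snd z) powr (p - a)) \<partial>(lebesgue \<Otimes>\<^sub>M lebesgue)) < \<infinity>" .
  qed
  define cM where "cM = 2 powr (p - 1) * M"
  have cM: "0 \<le> cM" unfolding cM_def using M by simp
  have keyb: "\<bar>u x - u y\<bar> powr (p - 1) * \<bar>\<phi> x\<bar> / norm (x - y) powr a \<le> cM * G r (x, y)"
    if "x \<in> K" "r \<le> norm (x - y)" for x y r
  proof -
    have "\<bar>u x - u y\<bar> powr (p - 1) * \<bar>\<phi> x\<bar> \<le> (2 powr (p - 1) * (\<bar>u x\<bar> powr (p - 1) + \<bar>u y\<bar> powr (p - 1))) * M"
      using abs_diff_powr_le[of "p - 1" "u x" "u y"] p M by (intro mult_mono) auto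
    then have "\<bar>u x - u y\<bar> powr (p - 1) * \<bar>\<phi> x\<bar> / norm (x - y) powr a \<le> (2 powr (p - 1) * (\<bar>u x\<bar> powr (p - 1) + \<bar>u y\<bar> powr (p - 1))) * M / norm (x - y) powr a"
      by (intro divide_right_mono) auto
    also have "\<dots> = cM * G r (x, y)" using that unfolding cM_def G_def by (simp add: algebra_simps)
    finally show ?thesis .
  qed
  define F where "F z = spow (u (fst z) - u (snd z)) (p - 1) * (\<phi> (fst z) - \<phi> (snd z)) / norm (fst z - snd z) powr a" for z
  have Fmeas[measurable]: "F \<in> borel_measurable (lebesgue \<Otimes>\<^sub>M lebesgue)" unfolding F_def spow_def by measurable
  define Bnd where "Bnd z = indicator (U \<times> U) z * (\<bar>u (fst z) - u (snd z)\<bar> powr p / norm (fst z - snd z) powr a)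
     + L powr p * (indicator (U \<times> U) z * norm (fst z - snd z) powr (p - a)) + cM * G \<delta> z + cM * G \<delta> (snd z, fst z)" for z
  have Gswap: "integrable (lebesgue \<Otimes>\<^sub>M lebesgue) (\<lambda>z. G r (snd z, fst z))" if "0 < r" for r
  proof -
    have "integrable (lebesgue \<Otimes>\<^sub>M lebesgue) (\<lambda>(x, y). G r (y, x))"
      using lebesgue_pair.integrable_product_swap[OF Gint[OF that]] .
    then show ?thesis by (simp add: case_prod_beta')
  qed
  have intBnd: "integrable (lebesgue \<Otimes>\<^sub>M lebesgue) Bnd"
    unfolding Bnd_def using intW intLip Gint[OF \<delta>(1)] Gswap[OF \<delta>(1)] by auto
  have Fbnd: "\<bar>F (x, y)\<bar> \<le> Bnd (x, y)" for x y
  proof -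
    have Gnn': "0 \<le> cM * G \<delta> (x, y)" "0 \<le> cM * G \<delta> (y, x)" using Gnn cM by auto
    have I0: "0 \<le> indicator (U \<times> U) (x, y) * (\<bar>u x - u y\<bar> powr p / norm (x - y) powr a)"
      "0 \<le> L powr p * (indicator (U \<times> U) (x, y) * norm (x - y) powr (p - a))" by auto
    have B0: "0 \<le> Bnd (x, y)" unfolding Bnd_def using Gnn' I0 by simp
    have Fabs: "\<bar>F (x, y)\<bar> = \<bar>u x - u y\<bar> powr (p - 1) * \<bar>\<phi> x - \<phi> y\<bar> / norm (x - y) powr a"
      unfolding F_def by (simp add: spow_abs abs_mult)
    consider (dg) "x = y" | (UU) "x \<noteq> y" "x \<in> U" "y \<in> U" | (zero) "x \<notin> K" "y \<notin> K"
      | (xK) "x \<in> K" "y \<notin> U" | (yK) "y \<in> K" "x \<notin> U"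
      using KU by blast
    then show ?thesis
    proof cases
      case dg
      then show ?thesis using B0 by (simp add: F_def)
    next
      case zero
      then show ?thesis using B0 \<phi>0 by (simp add: F_def)
    next
      case UU
      define d where "d = norm (x - y)"
      have d: "0 < d" using UU unfolding d_def by simp
      have "\<bar>\<phi> x - \<phi> y\<bar> powr p \<le> (L * d) powr p" using L(2)[of x y] p unfolding d_def by (intro powr_mono2) auto
      also have "\<dots> = L powr p * d powr p" using L(1) d by (simp add: powr_mult)
      finally have lip: "\<bar>\<phi> x - \<phi> y\<bar> powr p \<le> L powr p * d powr p" .
      have "\<bar>F (x, y)\<bar> \<le> (\<bar>u x - u y\<bar> powr p + \<bar>\<phi> x - \<phi> y\<bar> powr p) / d powr a"
        unfolding Fabs d_def[symmetric] using powr_mult_le_sum[of "\<bar>u x - u y\<bar>" "\<bar>\<phi> x - \<phi> y\<bar>" p] p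
        by (intro divide_right_mono) auto
      also have "\<dots> \<le> (\<bar>u x - u y\<bar> powr p + L powr p * d powr p) / d powr a"
        using lip by (intro divide_right_mono) auto
      also have "\<dots> = \<bar>u x - u y\<bar> powr p / d powr a + L powr p * d powr (p - a)"
        using d by (simp add: add_divide_distrib powr_diff)
      also have "\<dots> \<le> Bnd (x, y)" unfolding Bnd_def d_def using UU Gnn' by simp
      finally show ?thesis .
    next
      case xK
      have "x \<in> U" using xK KU by auto
      have "y \<notin> cball x \<delta>"
      proof
        assume "y \<in> cball x \<delta>"
        then have "y \<in> U" using xK(1) \<delta>(2) by blast
        then show False using xK(2) by simp
      qed
      then have "\<delta> \<le> norm (x - y)" by (simp add: dist_norm)
      have "\<phi> y = 0" using xK KU \<phi>0 by auto
      then have "\<bar>F (x, y)\<bar> = \<bar>u x - u y\<bar> powr (p - 1) * \<bar>\<phi> x\<bar> / norm (x - y) powr a" using Fabs by simp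
      also have "\<dots> \<le> cM * G \<delta> (x, y)" using keyb[OF xK(1) \<open>\<delta> \<le> norm (x - y)\<close>] .
      also have "\<dots> \<le> Bnd (x, y)" unfolding Bnd_def using Gnn' I0 by simp
      finally show ?thesis .
    next
      case yK
      have "x \<notin> cball y \<delta>"
      proof
        assume "x \<in> cball y \<delta>"
        then have "x \<in> U" using yK(1) \<delta>(2) by blast
        then show False using yK(2) by simp
      qed
      then have "\<delta> \<le> norm (y - x)" by (simp add: dist_norm)
      have "\<phi> x = 0" using yK KU \<phi>0 by auto
      then have "\<bar>F (x, y)\<bar> = \<bar>u y - u x\<bar> powr (p - 1) * \<bar>\<phi> y\<bar> / norm (y - x) powr a"
        using Fabs by (simp add: abs_minus_commute norm_minus_commute)
      also have "\<dots> \<le> cM * G \<delta> (y, x)" using keyb[OF yK(1) \<open>\<delta> \<le> norm (y - x)\<close>] .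
      also have "\<dots> \<le> Bnd (x, y)" unfolding Bnd_def using Gnn' I0 by simp
      finally show ?thesis .
    qed
  qed
  have Fint: "integrable (lebesgue \<Otimes>\<^sub>M lebesgue) F"
  proof (rule Bochner_Integration.integrable_bound[OF intBnd Fmeas])
    show "AE z in lebesgue \<Otimes>\<^sub>M lebesgue. norm (F z) \<le> norm (Bnd z)"
    proof (rule AE_I2)
      fix z :: "'a \<times> 'a"
      obtain x y where z: "z = (x, y)" by (cases z)
      show "norm (F z) \<le> norm (Bnd z)" using Fbnd[of x y] z by simp
    qed
  qed
  define Gc where "Gc = (\<lambda>\<epsilon> x. 2 * (LINT y:(UNIV - {y. (x, y) \<in> A \<epsilon>})|lebesgue.
            spow (u x - u y) (p - 1) / norm (x - y) powr (real DIM('a) + p * s)))"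
  define Fe where "Fe \<epsilon> z = indicator (UNIV - A \<epsilon>) z * F z" for \<epsilon> z
  have Femeas[measurable]: "Fe \<epsilon> \<in> borel_measurable (lebesgue \<Otimes>\<^sub>M lebesgue)" if "0 < \<epsilon>" for \<epsilon>
  proof -
    have [measurable]: "A \<epsilon> \<in> sets (lebesgue \<Otimes>\<^sub>M lebesgue)" using A_meas that by blast
    show ?thesis unfolding Fe_def by measurable
  qed
  have intFe: "integral\<^sup>L (lebesgue \<Otimes>\<^sub>M lebesgue) (Fe \<epsilon>) = (\<integral>x. \<phi> x * Gc \<epsilon> x \<partial>lebesgue)" if \<epsilon>: "0 < \<epsilon>" for \<epsilon>
  proof -
    have Ameas[measurable]: "A \<epsilon> \<in> sets (lebesgue \<Otimes>\<^sub>M lebesgue)" using A_meas \<epsilon> by blast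
    obtain V where V: "open V" "diag \<subseteq> V" "V \<subseteq> A \<epsilon>" using A_nbhd \<epsilon> by blast
    have cmp: "compact ((\<lambda>x. (x, x)) ` K)" using Kc by (intro compact_continuous_image) (auto intro!: continuous_intros)
    have "(\<lambda>x. (x, x)) ` K \<subseteq> V" using V(2) unfolding diag_def by auto
    then obtain r where r: "0 < r" "(\<Union>w\<in>(\<lambda>x. (x, x)) ` K. cball w r) \<subseteq> V"
      using compact_subset_open_imp_cball_epsilon_subset[OF cmp V(1)] by blast
    have far: "r \<le> norm (x - y)" if "x \<in> K" "(x, y) \<notin> A \<epsilon>" for x y
    proof (rule ccontr)
      assume "\<not> r \<le> norm (x - y)"
      then have "(x, y) \<in> cball (x, x) r" by (simp add: dist_Pair_Pair dist_norm norm_minus_commute)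
      then have "(x, y) \<in> V" using r(2) that(1) by blast
      then show False using V(3) that(2) by blast
    qed
    define P where "P z = indicator (UNIV - A \<epsilon>) z * (spow (u (fst z) - u (snd z)) (p - 1) * \<phi> (fst z) / norm (fst z - snd z) powr a)" for z
    have Pmeas[measurable]: "P \<in> borel_measurable (lebesgue \<Otimes>\<^sub>M lebesgue)" unfolding P_def spow_def by measurable
    have Pbnd: "\<bar>P (x, y)\<bar> \<le> cM * G r (x, y)" for x y
    proof (cases "x \<in> K \<and> (x, y) \<notin> A \<epsilon>")
      case True
      have "\<bar>P (x, y)\<bar> = \<bar>u x - u y\<bar> powr (p - 1) * \<bar>\<phi> x\<bar> / norm (x - y) powr a"
        using True unfolding P_def by (simp add: spow_abs abs_mult)
      also have "\<dots> \<le> cM * G r (x, y)" using keyb[of x r y] True far by blast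
      finally show ?thesis .
    next
      case False
      then have "P (x, y) = 0" unfolding P_def using \<phi>0 by auto
      then show ?thesis using cM Gnn by simp
    qed
    have Pint: "integrable (lebesgue \<Otimes>\<^sub>M lebesgue) P"
    proof (rule Bochner_Integration.integrable_bound[OF _ Pmeas])
      show "integrable (lebesgue \<Otimes>\<^sub>M lebesgue) (\<lambda>z. cM * G r z)" using Gint[OF r(1)] by auto
      show "AE z in lebesgue \<Otimes>\<^sub>M lebesgue. norm (P z) \<le> norm (cM * G r z)"
      proof (rule AE_I2)
        fix z :: "'a \<times> 'a"
        obtain x y where z: "z = (x, y)" by (cases z)
        show "norm (P z) \<le> norm (cM * G r z)" using Pbnd[of x y] z cM Gnn[of r z] by simp
      qed
    qed
    have Pswap: "integrable (lebesgue \<Otimes>\<^sub>M lebesgue) (\<lambda>z. P (snd z, fst z))"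
    proof -
      have "integrable (lebesgue \<Otimes>\<^sub>M lebesgue) (\<lambda>(x, y). P (y, x))"
        using lebesgue_pair.integrable_product_swap[OF Pint] .
      then show ?thesis by (simp add: case_prod_beta')
    qed
    have symA: "((y, x) \<in> A \<epsilon>) = ((x, y) \<in> A \<epsilon>)" for x y using A_sym[OF \<epsilon>] by blast
    have Feq: "Fe \<epsilon> z = P z + P (snd z, fst z)" for z
    proof -
      obtain x y where z: "z = (x, y)" by (cases z)
      have sp: "spow (u y - u x) (p - 1) = - spow (u x - u y) (p - 1)"
        using spow_minus[of "u x - u y" "p - 1"] by simp
      show ?thesis unfolding z Fe_def P_def F_def
        by (simp add: symA sp norm_minus_commute indicator_def diff_divide_distrib algebra_simps)
    qed
    have "integral\<^sup>L (lebesgue \<Otimes>\<^sub>M lebesgue) (Fe \<epsilon>) = integral\<^sup>L (lebesgue \<Otimes>\<^sub>M lebesgue) P + integral\<^sup>L (lebesgue \<Otimes>\<^sub>M lebesgue) (\<lambda>z. P (snd z, fst z))"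
      unfolding Feq by (rule Bochner_Integration.integral_add[OF Pint Pswap])
    also have "integral\<^sup>L (lebesgue \<Otimes>\<^sub>M lebesgue) (\<lambda>z. P (snd z, fst z)) = integral\<^sup>L (lebesgue \<Otimes>\<^sub>M lebesgue) P"
      using lebesgue_pair.integral_product_swap[OF Pmeas] by (simp add: case_prod_beta')
    also have "integral\<^sup>L (lebesgue \<Otimes>\<^sub>M lebesgue) P = (\<integral>x. \<integral>y. P (x, y) \<partial>lebesgue \<partial>lebesgue)"
      using lebesgue_pair.integral_fst'[OF Pint] by simp
    also have "(\<lambda>x. \<integral>y. P (x, y) \<partial>lebesgue) = (\<lambda>x. \<phi> x * (Gc \<epsilon> x / 2))"
    proof
      fix x
      have e: "(\<lambda>y. P (x, y)) = (\<lambda>y. \<phi> x * (indicator (UNIV - {y. (x, y) \<in> A \<epsilon>}) y *\<^sub>R (spow (u x - u y) (p - 1) / norm (x - y) powr (real DIM('a) + p * s))))"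
        unfolding P_def a_def N_def by (auto simp: indicator_def)
      have "(\<integral>y. P (x, y) \<partial>lebesgue) = \<phi> x * (\<integral>y. indicator (UNIV - {y. (x, y) \<in> A \<epsilon>}) y *\<^sub>R (spow (u x - u y) (p - 1) / norm (x - y) powr (real DIM('a) + p * s)) \<partial>lebesgue)"
        unfolding e by (rule integral_mult_right_zero)
      then show "(\<integral>y. P (x, y) \<partial>lebesgue) = \<phi> x * (Gc \<epsilon> x / 2)"
        unfolding Gc_def set_lebesgue_integral_def by simp
    qed
    finally show ?thesis by simp
  qed
  define S where "S n = inverse (real (Suc n))" for n :: nat
  have S0: "0 < S n" for n unfolding S_def by simp
  have Slim: "S \<longlonglongrightarrow> 0" unfolding S_def by (rule LIMSEQ_inverse_real_of_nat)
  have Sfilt: "filterlim S (at_right 0) sequentially"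
    by (rule tendsto_imp_filterlim_at_right[OF Slim]) (simp add: S0)
  have diag_closed: "closed (diag :: ('a \<times> 'a) set)"
  proof -
    have "diag = {z :: 'a \<times> 'a. fst z = snd z}" unfolding diag_def by auto
    moreover have "closed {z :: 'a \<times> 'a. fst z = snd z}" by (intro closed_Collect_eq continuous_intros)
    ultimately show ?thesis by simp
  qed
  have diag_ne: "(diag :: ('a \<times> 'a) set) \<noteq> {}" unfolding diag_def by auto
  have H: "(\<lambda>n. hausdist_ext (A (S n)) diag) \<longlonglongrightarrow> 0"
    using filterlim_compose[OF A_haus Sfilt] .
  have lim1: "(\<lambda>n. integral\<^sup>L (lebesgue \<Otimes>\<^sub>M lebesgue) (Fe (S n))) \<longlonglongrightarrow> integral\<^sup>L (lebesgue \<Otimes>\<^sub>M lebesgue) F"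
  proof (rule integral_dominated_convergence[where w="\<lambda>z. \<bar>F z\<bar>"])
    show "F \<in> borel_measurable (lebesgue \<Otimes>\<^sub>M lebesgue)" by (rule Fmeas)
    show "Fe (S n) \<in> borel_measurable (lebesgue \<Otimes>\<^sub>M lebesgue)" for n using Femeas[OF S0] .
    show "integrable (lebesgue \<Otimes>\<^sub>M lebesgue) (\<lambda>z. \<bar>F z\<bar>)" using Fint by auto
    show "AE z in lebesgue \<Otimes>\<^sub>M lebesgue. norm (Fe (S n) z) \<le> \<bar>F z\<bar>" for n
      by (rule AE_I2) (auto simp: Fe_def indicator_def abs_mult)
    show "AE z in lebesgue \<Otimes>\<^sub>M lebesgue. (\<lambda>n. Fe (S n) z) \<longlonglongrightarrow> F z"
    proof (rule AE_I2)
      fix z :: "'a \<times> 'a"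
      obtain x y where z: "z = (x, y)" by (cases z)
      show "(\<lambda>n. Fe (S n) z) \<longlonglongrightarrow> F z"
      proof (cases "x = y")
        case True
        then have "Fe (S n) z = F z" for n unfolding z Fe_def F_def by simp
        then show ?thesis by simp
      next
        case False
        then have "z \<notin> diag" unfolding z diag_def by auto
        then have d0: "0 < infdist z diag" using infdist_pos_not_in_closed[OF diag_closed diag_ne] by blast
        have "eventually (\<lambda>n. hausdist_ext (A (S n)) diag < ereal (infdist z diag)) sequentially"
          using order_tendstoD(2)[OF H] d0 by simp
        then have "eventually (\<lambda>n. F z = Fe (S n) z) sequentially"
        proof (rule eventually_mono)
          fix n
          assume hn: "hausdist_ext (A (S n)) diag < ereal (infdist z diag)"
          have "z \<notin> A (S n)"
          proof
            assume zA: "z \<in> A (S n)"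
            have "ereal (infdist z diag) \<le> (SUP w\<in>A (S n). ereal (infdist w diag))"
              using zA by (rule SUP_upper)
            also have "\<dots> \<le> hausdist_ext (A (S n)) diag" unfolding hausdist_ext_def by simp
            finally show False using hn by simp
          qed
          then show "F z = Fe (S n) z" unfolding Fe_def by simp
        qed
        then show ?thesis by (rule Lim_transform_eventually[OF tendsto_const])
      qed
    qed
  qed
  define I where "I = (LINT x:\<Omega>|lebesgue. f x * \<phi> x)"
  have lim2: "((\<lambda>\<epsilon>. \<integral>x. \<phi> x * Gc \<epsilon> x \<partial>lebesgue) \<longlongrightarrow> I) (at_right 0)"
  proof -
    have conv': "L1_loc_tendsto \<Omega> Gc f" using conv unfolding Gc_def .
    have ev: "eventually (\<lambda>\<epsilon>. set_integrable lebesgue K (Gc \<epsilon>)) (at_right 0)"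
      and Y: "((\<lambda>\<epsilon>. LINT x:K|lebesgue. \<bar>Gc \<epsilon> x - f x\<bar>) \<longlongrightarrow> 0) (at_right 0)"
      using conv' Kc K\<Omega> unfolding L1_loc_tendsto_def by blast+
    have fK: "set_integrable lebesgue K f" using f Kc K\<Omega> unfolding L1_loc_def by blast
    define hf where "hf x = indicator K x * f x" for x
    have hfint: "integrable lebesgue hf" using fK unfolding set_integrable_def hf_def by simp
    have \<phi>mul: "integrable lebesgue (\<lambda>x. \<phi> x * h x)" if hint: "integrable lebesgue h" for h
    proof (rule Bochner_Integration.integrable_bound[of _ "\<lambda>x. M * h x"])
      show "integrable lebesgue (\<lambda>x. M * h x)" using hint by auto
      have [measurable]: "h \<in> borel_measurable lebesgue" using hint by (rule borel_measurable_integrable)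
      show "(\<lambda>x. \<phi> x * h x) \<in> borel_measurable lebesgue" by measurable
      show "AE x in lebesgue. norm (\<phi> x * h x) \<le> norm (M * h x)"
      proof (rule AE_I2)
        fix x
        have "\<bar>\<phi> x\<bar> * \<bar>h x\<bar> \<le> M * \<bar>h x\<bar>" using M(2)[of x] by (intro mult_right_mono) auto
        then show "norm (\<phi> x * h x) \<le> norm (M * h x)" using M(1) by (simp add: abs_mult)
      qed
    qed
    have Ieq: "I = (\<integral>x. \<phi> x * hf x \<partial>lebesgue)"
      unfolding I_def set_lebesgue_integral_def hf_def
      by (intro Bochner_Integration.integral_cong) (use K\<Omega> \<phi>0 in \<open>auto simp: indicator_def\<close>)
    have bound: "eventually (\<lambda>\<epsilon>. norm ((\<integral>x. \<phi> x * Gc \<epsilon> x \<partial>lebesgue) - I) \<le> M * (LINT x:K|lebesgue. \<bar>Gc \<epsilon> x - f x\<bar>)) (at_right 0)"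
      using ev
    proof (rule eventually_mono)
      fix \<epsilon> assume gK: "set_integrable lebesgue K (Gc \<epsilon>)"
      define hG where "hG x = indicator K x * Gc \<epsilon> x" for x
      have hGint: "integrable lebesgue hG" using gK unfolding set_integrable_def hG_def by simp
      have e1: "(\<integral>x. \<phi> x * Gc \<epsilon> x \<partial>lebesgue) = (\<integral>x. \<phi> x * hG x \<partial>lebesgue)"
        unfolding hG_def by (intro Bochner_Integration.integral_cong) (use \<phi>0 in \<open>auto simp: indicator_def\<close>)
      have "(\<integral>x. \<phi> x * Gc \<epsilon> x \<partial>lebesgue) - I = (\<integral>x. \<phi> x * hG x - \<phi> x * hf x \<partial>lebesgue)"
        unfolding e1 Ieq by (rule Bochner_Integration.integral_diff[symmetric, OF \<phi>mul[OF hGint] \<phi>mul[OF hfint]])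
      also have "norm \<dots> \<le> (\<integral>x. M * \<bar>hG x - hf x\<bar> \<partial>lebesgue)"
      proof (rule Bochner_Integration.integral_norm_bound_integral)
        show "integrable lebesgue (\<lambda>x. \<phi> x * hG x - \<phi> x * hf x)"
          using \<phi>mul[OF hGint] \<phi>mul[OF hfint] by (rule Bochner_Integration.integrable_diff)
        show "integrable lebesgue (\<lambda>x. M * \<bar>hG x - hf x\<bar>)"
          using Bochner_Integration.integrable_diff[OF hGint hfint] by auto
        fix x
        have "\<bar>\<phi> x\<bar> * \<bar>hG x - hf x\<bar> \<le> M * \<bar>hG x - hf x\<bar>" using M(2)[of x] by (intro mult_right_mono) auto
        then show "norm (\<phi> x * hG x - \<phi> x * hf x) \<le> M * \<bar>hG x - hf x\<bar>"
          by (simp add: abs_mult right_diff_distrib[symmetric])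
      qed
      also have "(\<integral>x. M * \<bar>hG x - hf x\<bar> \<partial>lebesgue) = M * (LINT x:K|lebesgue. \<bar>Gc \<epsilon> x - f x\<bar>)"
      proof -
        have "(\<lambda>x. M * \<bar>hG x - hf x\<bar>) = (\<lambda>x. M * (indicator K x *\<^sub>R \<bar>Gc \<epsilon> x - f x\<bar>))"
          by (auto simp: hG_def hf_def indicator_def)
        then show ?thesis unfolding set_lebesgue_integral_def by (simp only: integral_mult_right_zero)
      qed
      finally show "norm ((\<integral>x. \<phi> x * Gc \<epsilon> x \<partial>lebesgue) - I) \<le> M * (LINT x:K|lebesgue. \<bar>Gc \<epsilon> x - f x\<bar>)" .
    qed
    have "((\<lambda>\<epsilon>. M * (LINT x:K|lebesgue. \<bar>Gc \<epsilon> x - f x\<bar>)) \<longlongrightarrow> M * 0) (at_right 0)"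
      by (intro tendsto_mult tendsto_const Y)
    then have "((\<lambda>\<epsilon>. (\<integral>x. \<phi> x * Gc \<epsilon> x \<partial>lebesgue) - I) \<longlongrightarrow> 0) (at_right 0)"
      by (intro Lim_null_comparison[OF bound]) simp
    then show ?thesis by (rule LIM_zero_cancel)
  qed
  have lim3: "(\<lambda>n. integral\<^sup>L (lebesgue \<Otimes>\<^sub>M lebesgue) (Fe (S n))) \<longlonglongrightarrow> I"
  proof -
    have "(\<lambda>n. \<integral>x. \<phi> x * Gc (S n) x \<partial>lebesgue) \<longlonglongrightarrow> I"
      using filterlim_compose[OF lim2 Sfilt] .
    moreover have "integral\<^sup>L (lebesgue \<Otimes>\<^sub>M lebesgue) (Fe (S n)) = (\<integral>x. \<phi> x * Gc (S n) x \<partial>lebesgue)" for n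
      using intFe[OF S0] .
    ultimately show ?thesis by simp
  qed
  have "integral\<^sup>L (lebesgue \<Otimes>\<^sub>M lebesgue) F = I" using LIMSEQ_unique[OF lim1 lim3] .
  then show ?thesis unfolding F_def a_def N_def I_def .
qed

end
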